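(* Let $\Gamma=(V,E)$ be a simple graph of order $n$ and minimum degree $\delta$, and let $\mu_*$ be the Laplacian spectral radius of $\Gamma$. Then the global offensive alliance number of $\Gamma$ satisfies $$\gamma_{a_o}(\Gamma)\ge \left\lceil\frac{n}{\mu_*}\left\lceil\frac{\delta +1}{2}\right\rceil\right\rceil$$ and the global strong offensive alliance number of $\Gamma$ satisfies $$\gamma_{\hat{a}_o}(\Gamma)\ge \left\lceil\frac{n}{\mu_*}\left(\left\lceil\frac{\delta }{2}\right\rceil+1\right)\right\rceil.$$
   Context: For $S\subseteq V$ and $v\in V$, $N_S(v)=\{u\in S: u\sim v\}$ and $N_{V\setminus S}(v)=\{u\in V\setminus S: u\sim v\}$. A nonempty set $S\subseteq V$ is a global offensive alliance if $|N_S(v)|\ge |N_{V\setminus S}(v)|+1$ for every $v\in V\setminus S$, and a global strong offensive alliance if $|N_S(v)|\ge |N_{V\setminus S}(v)|+2$ for every $v\in V\setminus S$. $\gamma_{a_o}(\Gamma)$ (resp. $\gamma_{\hat a_o}(\Gamma)$) is the minimum cardinality of a global offensive (resp. global strong offensive) alliance. The Laplacian spectral radius is the largest eigenvalue of the Laplacian matrix of $\Gamma$. *)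

theory Defs
  imports Complex_Main
begin

definition simple_graph :: "'a set \<Rightarrow> ('a \<Rightarrow> 'a \<Rightarrow> bool) \<Rightarrow> bool" where
  "simple_graph V E \<longleftrightarrow> finite V \<and> (\<forall>u v. E u v \<longrightarrow> E v u) \<and> (\<forall>v. \<not> E v v)
     \<and> (\<forall>u v. E u v \<longrightarrow> u \<in> V \<and> v \<in> V)"

definition nbhd_in :: "('a \<Rightarrow> 'a \<Rightarrow> bool) \<Rightarrow> 'a set \<Rightarrow> 'a \<Rightarrow> 'a set" where
  "nbhd_in E S v = {u \<in> S. E u v}"

definition degree :: "'a set \<Rightarrow> ('a \<Rightarrow> 'a \<Rightarrow> bool) \<Rightarrow> 'a \<Rightarrow> nat" where
  "degree V E v = card (nbhd_in E V v)"

definition min_degree :: "'a set \<Rightarrow> ('a \<Rightarrow> 'a \<Rightarrow> bool) \<Rightarrow> nat" where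
  "min_degree V E = Min (degree V E ` V)"

definition global_offensive_alliance :: "'a set \<Rightarrow> ('a \<Rightarrow> 'a \<Rightarrow> bool) \<Rightarrow> 'a set \<Rightarrow> bool" where
  "global_offensive_alliance V E S \<longleftrightarrow> S \<noteq> {} \<and> S \<subseteq> V \<and>
     (\<forall>v \<in> V - S. card (nbhd_in E S v) \<ge> card (nbhd_in E (V - S) v) + 1)"

definition global_strong_offensive_alliance :: "'a set \<Rightarrow> ('a \<Rightarrow> 'a \<Rightarrow> bool) \<Rightarrow> 'a set \<Rightarrow> bool" where
  "global_strong_offensive_alliance V E S \<longleftrightarrow> S \<noteq> {} \<and> S \<subseteq> V \<and>
     (\<forall>v \<in> V - S. card (nbhd_in E S v) \<ge> card (nbhd_in E (V - S) v) + 2)"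

definition offensive_alliance_number :: "'a set \<Rightarrow> ('a \<Rightarrow> 'a \<Rightarrow> bool) \<Rightarrow> nat" where
  "offensive_alliance_number V E = Min (card ` {S. global_offensive_alliance V E S})"

definition strong_offensive_alliance_number :: "'a set \<Rightarrow> ('a \<Rightarrow> 'a \<Rightarrow> bool) \<Rightarrow> nat" where
  "strong_offensive_alliance_number V E = Min (card ` {S. global_strong_offensive_alliance V E S})"

definition laplacian :: "'a set \<Rightarrow> ('a \<Rightarrow> 'a \<Rightarrow> bool) \<Rightarrow> 'a \<Rightarrow> 'a \<Rightarrow> real" where
  "laplacian V E u v = (if u = v then real (degree V E u) else if E u v then -1 else 0)"

definition is_eigenvalue_on :: "'a set \<Rightarrow> ('a \<Rightarrow> 'a \<Rightarrow> real) \<Rightarrow> real \<Rightarrow> bool" where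
  "is_eigenvalue_on V M mu \<longleftrightarrow> (\<exists>x :: 'a \<Rightarrow> real. (\<exists>v \<in> V. x v \<noteq> 0) \<and>
      (\<forall>u \<in> V. (\<Sum>v \<in> V. M u v * x v) = mu * x u))"

definition laplacian_spectral_radius :: "'a set \<Rightarrow> ('a \<Rightarrow> 'a \<Rightarrow> bool) \<Rightarrow> real" where
  "laplacian_spectral_radius V E = Max {mu. is_eigenvalue_on V (laplacian V E) mu}"

end

theory Submission imports Defs "HOL-Analysis.Analysis" "Jordan_Normal_Form.Char_Poly" begin

definition qf :: "'a set \<Rightarrow> ('a \<Rightarrow> 'a \<Rightarrow> real) \<Rightarrow> ('a \<Rightarrow> real) \<Rightarrow> real" where
  "qf V M x = (\<Sum>u\<in>V. \<Sum>v\<in>V. M u v * x u * x v)"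

definition nsq :: "'a set \<Rightarrow> ('a \<Rightarrow> real) \<Rightarrow> real" where
  "nsq V x = (\<Sum>v\<in>V. x v ^ 2)"

lemma qf_max_exists:
  assumes fin: "finite V" and ne: "V \<noteq> {}"
  shows "\<exists>x0. nsq V x0 = 1 \<and> (\<forall>x. nsq V x = 1 \<longrightarrow> qf V M x \<le> qf V M x0)"
proof -
  let ?X = "product_topology (\<lambda>_. euclideanreal) (UNIV :: 'a set)"
  define S where "S = (\<lambda>i::'a. if i \<in> V then {-1..1::real} else {0})"
  define K where "K = PiE UNIV S"
  have cK: "compactin ?X K"
    unfolding K_def by (subst compactin_PiE) (auto simp: S_def)
  have cq: "continuous_map ?X euclideanreal (qf V M)"
    unfolding qf_def
    by (intro continuous_map_sum continuous_map_real_mult continuous_map_const[THEN iffD2] fin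
        continuous_map_product_projection[where X="\<lambda>_. euclideanreal", simplified]) auto
  have cn: "continuous_map ?X euclideanreal (nsq V)"
    unfolding nsq_def power2_eq_square
    by (intro continuous_map_sum continuous_map_real_mult fin
        continuous_map_product_projection[where X="\<lambda>_. euclideanreal", simplified]) auto
  define T where "T = {x \<in> topspace ?X. nsq V x \<in> {1}} \<inter> K"
  have cT: "compactin ?X T"
    unfolding T_def
    by (intro closed_Int_compactin cK closedin_continuous_map_preimage[OF cn]) auto
  have cpt: "compact (qf V M ` T)"
    using image_compactin[OF cT cq] by simp
  obtain v0 where v0: "v0 \<in> V" using ne by auto
  define e where "e = (\<lambda>v. if v = v0 then 1 else (0::real))"
  have "nsq V e = (\<Sum>v\<in>V. if v = v0 then 1 else 0)"
    unfolding nsq_def by (rule sum.cong) (auto simp: e_def)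
  then have "nsq V e = 1" using fin v0 by simp
  moreover have "e \<in> K" by (auto simp: K_def S_def e_def v0)
  ultimately have "e \<in> T" by (auto simp: T_def)
  then obtain x0 where x0: "x0 \<in> T" "\<forall>y\<in>T. qf V M y \<le> qf V M x0"
    using cpt compact_attains_sup[of "qf V M ` T"] by blast
  show ?thesis
  proof (intro exI conjI allI impI)
    show "nsq V x0 = 1" using x0 by (auto simp: T_def)
    fix x assume nx: "nsq V x = 1"
    define y where "y = (\<lambda>v. if v \<in> V then x v else 0)"
    have qy: "qf V M y = qf V M x" unfolding qf_def y_def by simp
    have ny: "nsq V y = 1" using nx unfolding nsq_def y_def by simp
    have "y \<in> K"
    proof -
      have "\<bar>y v\<bar> \<le> 1" if "v \<in> V" for v
      proof -
        have "y v ^ 2 \<le> nsq V y" unfolding nsq_def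
          by (rule member_le_sum[OF that]) (auto simp: fin)
        then have "\<bar>y v\<bar> ^ 2 \<le> 1 ^ 2" using ny by simp
        then show ?thesis by (rule power2_le_imp_le) simp
      qed
      then show ?thesis by (auto simp: K_def S_def y_def abs_le_iff)
    qed
    then have "y \<in> T" using ny by (auto simp: T_def)
    then show "qf V M x \<le> qf V M x0" using x0 qy by auto
  qed
qed

lemma qf_expand:
  assumes sym: "\<And>u v. M u v = M v u"
  shows "qf V M (\<lambda>v. x v + t * y v) = qf V M x + 2 * t * (\<Sum>u\<in>V. \<Sum>v\<in>V. M u v * x u * y v) + t^2 * qf V M y"
proof -
  have sw: "(\<Sum>u\<in>V. \<Sum>v\<in>V. M u v * y u * x v) = (\<Sum>u\<in>V. \<Sum>v\<in>V. M u v * x u * y v)"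
    by (subst sum.swap) (simp add: sym mult.commute mult.left_commute)
  have "qf V M (\<lambda>v. x v + t * y v) = (\<Sum>u\<in>V. \<Sum>v\<in>V. M u v * x u * x v + t * (M u v * x u * y v) + t * (M u v * y u * x v) + t^2 * (M u v * y u * y v))"
    unfolding qf_def by (intro sum.cong refl) (simp add: algebra_simps power2_eq_square)
  also have "\<dots> = qf V M x + t * (\<Sum>u\<in>V. \<Sum>v\<in>V. M u v * x u * y v) + t * (\<Sum>u\<in>V. \<Sum>v\<in>V. M u v * y u * x v) + t^2 * qf V M y"
    unfolding qf_def by (simp add: sum.distrib sum_distrib_left)
  finally show ?thesis using sw by simp
qed

lemma nsq_expand:
  "nsq V (\<lambda>v. x v + t * y v) = nsq V x + 2 * t * (\<Sum>v\<in>V. x v * y v) + t^2 * nsq V y"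
  unfolding nsq_def by (simp add: power2_eq_square algebra_simps sum.distrib sum_distrib_left)

lemma qf_scale: "qf V M (\<lambda>v. c * x v) = c^2 * qf V M x"
  unfolding qf_def by (simp add: sum_distrib_left power2_eq_square algebra_simps)

lemma nsq_scale: "nsq V (\<lambda>v. c * x v) = c^2 * nsq V x"
  unfolding nsq_def by (simp add: sum_distrib_left power_mult_distrib)

lemma sym_max_eig:
  assumes fin: "finite V" and ne: "V \<noteq> {}" and sym: "\<And>u v. M u v = M v u"
  shows "\<exists>lam. is_eigenvalue_on V M lam \<and> (\<forall>x. qf V M x \<le> lam * nsq V x)"
proof -
  obtain x0 where x0: "nsq V x0 = 1" "\<And>x. nsq V x = 1 \<Longrightarrow> qf V M x \<le> qf V M x0"
    using qf_max_exists[OF fin ne, of M] by blast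
  define lam where "lam = qf V M x0"
  have ray: "qf V M x \<le> lam * nsq V x" for x
  proof (cases "nsq V x = 0")
    case True
    then have "\<forall>v\<in>V. x v ^ 2 = 0" unfolding nsq_def using fin
      by (subst (asm) sum_nonneg_eq_0_iff) auto
    then have "qf V M x = 0" unfolding qf_def by simp
    then show ?thesis using True by simp
  next
    case False
    have pos: "nsq V x > 0" using False unfolding nsq_def
      by (metis (no_types, lifting) less_eq_real_def sum_nonneg zero_le_power2)
    define r where "r = sqrt (nsq V x)"
    have r: "r > 0" "r^2 = nsq V x" using pos by (auto simp: r_def)
    have "nsq V (\<lambda>v. (1/r) * x v) = (1/r)^2 * nsq V x" by (rule nsq_scale)
    then have "nsq V (\<lambda>v. (1/r) * x v) = 1" using r False by (simp add: power_divide)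
    then have "qf V M (\<lambda>v. (1/r) * x v) \<le> lam" using x0 lam_def by blast
    moreover have "qf V M (\<lambda>v. (1/r) * x v) = (1/r)^2 * qf V M x" by (rule qf_scale)
    ultimately have "qf V M x / r^2 \<le> lam" by (simp add: power_divide)
    then show ?thesis using r pos by (simp add: divide_le_eq mult.commute)
  qed
  define w where "w = (\<lambda>u. (\<Sum>v\<in>V. M u v * x0 v) - lam * x0 u)"
  define a where "a = nsq V w"
  define b where "b = qf V M w - lam * nsq V w"
  have bnp: "b \<le> 0" using ray[of w] by (simp add: b_def)
  have a0: "a \<ge> 0" unfolding a_def nsq_def by (simp add: sum_nonneg)
  have C: "(\<Sum>u\<in>V. \<Sum>v\<in>V. M u v * x0 u * w v) - lam * (\<Sum>v\<in>V. x0 v * w v) = a"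
  proof -
    have "(\<Sum>u\<in>V. \<Sum>v\<in>V. M u v * x0 u * w v) = (\<Sum>v\<in>V. w v * (\<Sum>u\<in>V. M v u * x0 u))"
      by (subst sum.swap) (simp add: sum_distrib_left sym algebra_simps)
    then have "(\<Sum>u\<in>V. \<Sum>v\<in>V. M u v * x0 u * w v) - lam * (\<Sum>v\<in>V. x0 v * w v)
        = (\<Sum>v\<in>V. w v * ((\<Sum>u\<in>V. M v u * x0 u) - lam * x0 v))"
      by (simp add: sum_distrib_left right_diff_distrib sum_subtractf algebra_simps)
    also have "\<dots> = a" unfolding a_def nsq_def w_def by (simp add: power2_eq_square)
    finally show ?thesis .
  qed
  have ft: "2 * t * a + t^2 * b \<le> 0" for t
  proof -
    have "qf V M (\<lambda>v. x0 v + t * w v) \<le> lam * nsq V (\<lambda>v. x0 v + t * w v)" by (rule ray)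
    then have "lam + 2 * t * (\<Sum>u\<in>V. \<Sum>v\<in>V. M u v * x0 u * w v) + t^2 * qf V M w
       \<le> lam * (1 + 2 * t * (\<Sum>v\<in>V. x0 v * w v) + t^2 * nsq V w)"
      unfolding qf_expand[OF sym] nsq_expand x0(1) lam_def .
    then have "2 * t * ((\<Sum>u\<in>V. \<Sum>v\<in>V. M u v * x0 u * w v) - lam * (\<Sum>v\<in>V. x0 v * w v)) + t^2 * b \<le> 0"
      unfolding b_def by (simp add: algebra_simps)
    then show ?thesis using C by simp
  qed
  have "a = 0"
  proof (rule ccontr)
    assume "a \<noteq> 0"
    then have ap: "a > 0" using a0 by simp
    define t where "t = a / (\<bar>b\<bar> + 1)"
    have tp: "t > 0" using ap by (simp add: t_def add_pos_nonneg)
    have "2 * t * a + t^2 * b \<le> 0" by (rule ft)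
    then have "t * (2 * a + t * b) \<le> 0" by (simp add: power2_eq_square algebra_simps)
    then have h: "2 * a + t * b \<le> 0" using tp by (simp add: mult_le_0_iff)
    have "t * \<bar>b\<bar> < a" using ap unfolding t_def
      by (simp add: field_simps)
    then show False using h bnp ap by (simp add: abs_if split: if_splits)
  qed
  then have "\<forall>v\<in>V. w v ^ 2 = 0" using fin unfolding a_def nsq_def
    by (subst (asm) sum_nonneg_eq_0_iff) auto
  then have eq: "\<forall>u\<in>V. (\<Sum>v\<in>V. M u v * x0 v) = lam * x0 u" by (simp add: w_def)
  have "\<exists>v\<in>V. x0 v \<noteq> 0"
  proof (rule ccontr)
    assume "\<not> ?thesis"
    then have "nsq V x0 = 0" by (simp add: nsq_def)
    then show False using x0 by simp
  qed
  then have "is_eigenvalue_on V M lam" unfolding is_eigenvalue_on_def using eq by blast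
  then show ?thesis using ray by blast
qed

lemma eig_finite:
  assumes fin: "finite V"
  shows "finite {mu. is_eigenvalue_on V M mu}"
proof -
  obtain f where f: "bij_betw f {0..<card V} V" using ex_bij_betw_nat_finite[OF fin] by blast
  define n where "n = card V"
  define A :: "real mat" where "A = mat n n (\<lambda>(i,j). M (f i) (f j))"
  have A: "A \<in> carrier_mat n n" by (simp add: A_def)
  have sub: "{mu. is_eigenvalue_on V M mu} \<subseteq> {mu. poly (char_poly A) mu = 0}"
  proof
    fix mu assume "mu \<in> {mu. is_eigenvalue_on V M mu}"
    then obtain x where x: "\<exists>v\<in>V. x v \<noteq> 0" "\<forall>u\<in>V. (\<Sum>v\<in>V. M u v * x v) = mu * x u"
      unfolding is_eigenvalue_on_def by blast
    define vv where "vv = vec n (\<lambda>i. x (f i))"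
    have "eigenvector A vv mu"
      unfolding eigenvector_def
    proof (intro conjI)
      show "vv \<in> carrier_vec (dim_row A)" using A by (simp add: vv_def)
      obtain v0 where v0: "v0 \<in> V" "x v0 \<noteq> 0" using x by blast
      then obtain i where i: "i < n" "f i = v0" using f unfolding n_def bij_betw_def
        by (metis atLeastLessThan_iff imageE)
      show "vv \<noteq> 0\<^sub>v (dim_row A)"
      proof
        assume "vv = 0\<^sub>v (dim_row A)"
        then have "vv $ i = 0" using i A by simp
        then show False using i v0 by (simp add: vv_def)
      qed
      show "A *\<^sub>v vv = mu \<cdot>\<^sub>v vv"
      proof (rule eq_vecI)
        show "dim_vec (A *\<^sub>v vv) = dim_vec (mu \<cdot>\<^sub>v vv)" using A by (simp add: vv_def)
        fix i assume "i < dim_vec (mu \<cdot>\<^sub>v vv)"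
        then have i: "i < n" by (simp add: vv_def)
        have fi: "f i \<in> V" using f i unfolding n_def bij_betw_def by auto
        have "(A *\<^sub>v vv) $ i = (\<Sum>j\<in>{0..<n}. M (f i) (f j) * x (f j))"
          using i A by (simp add: A_def vv_def scalar_prod_def)
        also have "\<dots> = (\<Sum>w\<in>V. M (f i) w * x w)"
          using sum.reindex_bij_betw[OF f, of "\<lambda>w. M (f i) w * x w"] by (simp add: n_def)
        also have "\<dots> = mu * x (f i)" using x fi by blast
        finally show "(A *\<^sub>v vv) $ i = (mu \<cdot>\<^sub>v vv) $ i" using i by (simp add: vv_def)
      qed
    qed
    then have "eigenvalue A mu" unfolding eigenvalue_def by blast
    then show "mu \<in> {mu. poly (char_poly A) mu = 0}" using eigenvalue_root_char_poly[OF A] by simp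
  qed
  have "char_poly A \<noteq> 0" using degree_monic_char_poly[OF A] by auto
  then show ?thesis using poly_roots_finite finite_subset[OF sub] by blast
qed

lemma lap_sym:
  assumes g: "simple_graph V E"
  shows "laplacian V E u v = laplacian V E v u"
  using g unfolding simple_graph_def laplacian_def by (cases "u = v") auto

lemma lsr_props:
  assumes g: "simple_graph V E" and ne: "V \<noteq> {}"
  shows "is_eigenvalue_on V (laplacian V E) (laplacian_spectral_radius V E)"
    "\<And>x. qf V (laplacian V E) x \<le> laplacian_spectral_radius V E * nsq V x"
proof -
  have fin: "finite V" using g by (simp add: simple_graph_def)
  obtain lam where lam: "is_eigenvalue_on V (laplacian V E) lam"
      "\<forall>x. qf V (laplacian V E) x \<le> lam * nsq V x"
    using sym_max_eig[OF fin ne, of "laplacian V E"] lap_sym[OF g] by blast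
  let ?S = "{mu. is_eigenvalue_on V (laplacian V E) mu}"
  have fS: "finite ?S" by (rule eig_finite[OF fin])
  have "lam \<le> laplacian_spectral_radius V E"
    unfolding laplacian_spectral_radius_def using fS lam(1) by (intro Max_ge) auto
  moreover have "laplacian_spectral_radius V E \<in> ?S"
    unfolding laplacian_spectral_radius_def using fS lam(1) by (intro Max_in) auto
  ultimately show "is_eigenvalue_on V (laplacian V E) (laplacian_spectral_radius V E)" by simp
  fix x
  have "nsq V x \<ge> 0" unfolding nsq_def by (simp add: sum_nonneg)
  then have "lam * nsq V x \<le> laplacian_spectral_radius V E * nsq V x"
    using \<open>lam \<le> _\<close> by (simp add: mult_right_mono)
  then show "qf V (laplacian V E) x \<le> laplacian_spectral_radius V E * nsq V x"
    using lam(2) by (meson order_trans)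
qed

lemma lap_mult:
  assumes g: "simple_graph V E" and u: "u \<in> V"
  shows "(\<Sum>w\<in>V. laplacian V E u w * x w) = real (Defs.degree V E u) * x u - (\<Sum>w\<in>nbhd_in E V u. x w)"
proof -
  have fin: "finite V" using g by (simp add: simple_graph_def)
  have "(\<Sum>w\<in>V. laplacian V E u w * x w) = (\<Sum>w\<in>V. (if w = u then real (Defs.degree V E u) * x w else 0) - (if E w u then x w else 0))"
    using g unfolding simple_graph_def laplacian_def by (intro sum.cong refl) auto
  also have "\<dots> = real (Defs.degree V E u) * x u - (\<Sum>w\<in>V. if E w u then x w else 0)"
    using fin u by (simp add: sum_subtractf)
  also have "(\<Sum>w\<in>V. if E w u then x w else 0) = (\<Sum>w\<in>nbhd_in E V u. x w)"
    unfolding nbhd_in_def using fin by (simp add: sum.inter_filter)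
  finally show ?thesis .
qed

lemma qf_alt: "qf V M x = (\<Sum>u\<in>V. x u * (\<Sum>w\<in>V. M u w * x w))"
  unfolding qf_def by (simp add: sum_distrib_left algebra_simps)

lemma cut_bound:
  assumes g: "simple_graph V E" and SV: "S \<subseteq> V" and T: "V - S \<noteq> {}"
    and c: "\<forall>v\<in>V-S. c \<le> real (card (nbhd_in E S v))"
    and ray: "\<And>x. qf V (laplacian V E) x \<le> mu * nsq V x"
  shows "real (card V) * c \<le> mu * real (card S)"
proof -
  have fin: "finite V" using g by (simp add: simple_graph_def)
  define T where "T = V - S"
  have finS: "finite S" and finT: "finite T" using fin SV by (auto simp: T_def finite_subset)
  have VST: "V = S \<union> T" "S \<inter> T = {}" using SV by (auto simp: T_def)
  define s where "s = real (card S)"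
  define t where "t = real (card T)"
  define n where "n = real (card V)"
  have nst: "n = s + t" unfolding n_def s_def t_def
    using card_Un_disjoint[OF finS finT VST(2)] VST(1) by simp
  have tp: "t > 0" using T finT by (simp add: t_def T_def card_gt_0_iff)
  define NS where "NS = (\<lambda>u. real (card (nbhd_in E S u)))"
  define NT where "NT = (\<lambda>u. real (card (nbhd_in E T u)))"
  define x where "x = (\<lambda>v. if v \<in> S then t else - s)"
  have deg: "real (Defs.degree V E u) = NS u + NT u" for u
  proof -
    have "nbhd_in E V u = nbhd_in E S u \<union> nbhd_in E T u"
         "nbhd_in E S u \<inter> nbhd_in E T u = {}"
      using VST unfolding nbhd_in_def by auto
    moreover have "finite (nbhd_in E S u)" "finite (nbhd_in E T u)"
      using finS finT unfolding nbhd_in_def by auto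
    ultimately show ?thesis unfolding Defs.degree_def NS_def NT_def by (simp add: card_Un_disjoint)
  qed
  have sumN: "(\<Sum>w\<in>nbhd_in E V u. x w) = NS u * t - NT u * s" for u
  proof -
    have "nbhd_in E V u = nbhd_in E S u \<union> nbhd_in E T u"
         "nbhd_in E S u \<inter> nbhd_in E T u = {}"
      using VST unfolding nbhd_in_def by auto
    moreover have "finite (nbhd_in E S u)" "finite (nbhd_in E T u)"
      using finS finT unfolding nbhd_in_def by auto
    ultimately have "(\<Sum>w\<in>nbhd_in E V u. x w) = (\<Sum>w\<in>nbhd_in E S u. x w) + (\<Sum>w\<in>nbhd_in E T u. x w)"
      by (simp add: sum.union_disjoint)
    also have "(\<Sum>w\<in>nbhd_in E S u. x w) = (\<Sum>w\<in>nbhd_in E S u. t)"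
      by (intro sum.cong refl) (auto simp: x_def nbhd_in_def)
    also have "(\<Sum>w\<in>nbhd_in E T u. x w) = (\<Sum>w\<in>nbhd_in E T u. - s)"
      using VST by (intro sum.cong refl) (auto simp: x_def nbhd_in_def)
    finally show ?thesis by (simp add: NS_def NT_def)
  qed
  have Lx: "(\<Sum>w\<in>V. laplacian V E u w * x w) = (if u \<in> S then NT u * n else - (NS u * n))"
    if "u \<in> V" for u
    using lap_mult[OF g that, of x] deg[of u] sumN[of u] nst
    by (auto simp: x_def algebra_simps)
  have "qf V (laplacian V E) x = (\<Sum>u\<in>S. t * (NT u * n)) + (\<Sum>u\<in>T. (- s) * (- (NS u * n)))"
  proof -
    have "qf V (laplacian V E) x = (\<Sum>u\<in>S \<union> T. x u * (\<Sum>w\<in>V. laplacian V E u w * x w))"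
      unfolding qf_alt VST(1)[symmetric] ..
    also have "\<dots> = (\<Sum>u\<in>S. x u * (\<Sum>w\<in>V. laplacian V E u w * x w)) + (\<Sum>u\<in>T. x u * (\<Sum>w\<in>V. laplacian V E u w * x w))"
      using finS finT VST(2) by (simp add: sum.union_disjoint)
    also have "(\<Sum>u\<in>S. x u * (\<Sum>w\<in>V. laplacian V E u w * x w)) = (\<Sum>u\<in>S. t * (NT u * n))"
      using SV by (intro sum.cong refl) (subst Lx, auto simp: x_def)
    also have "(\<Sum>u\<in>T. x u * (\<Sum>w\<in>V. laplacian V E u w * x w)) = (\<Sum>u\<in>T. (- s) * (- (NS u * n)))"
      using VST by (intro sum.cong refl) (subst Lx, auto simp: x_def)
    finally show ?thesis .
  qed
  moreover have dc: "(\<Sum>u\<in>S. NT u) = (\<Sum>u\<in>T. NS u)"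
  proof -
    have "(\<Sum>u\<in>S. NT u) = (\<Sum>u\<in>S. \<Sum>v\<in>T. if E v u then 1 else 0)"
      unfolding NT_def nbhd_in_def using finT by (intro sum.cong refl) (simp add: sum.If_cases Int_def)
    also have "\<dots> = (\<Sum>v\<in>T. \<Sum>u\<in>S. if E v u then 1 else 0)" by (rule sum.swap)
    also have "\<dots> = (\<Sum>v\<in>T. \<Sum>u\<in>S. if E u v then 1 else 0)"
      using g unfolding simple_graph_def by (intro sum.cong refl) metis
    also have "\<dots> = (\<Sum>u\<in>T. NS u)"
      unfolding NS_def nbhd_in_def using finS by (intro sum.cong refl) (simp add: sum.If_cases Int_def)
    finally show ?thesis .
  qed
  moreover have "(\<Sum>u\<in>S. t * (NT u * n)) = t * n * (\<Sum>u\<in>S. NT u)"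
    by (simp add: sum_distrib_left algebra_simps)
  moreover have "(\<Sum>u\<in>T. (- s) * (- (NS u * n))) = s * n * (\<Sum>u\<in>T. NS u)"
    by (simp add: sum_distrib_left algebra_simps)
  ultimately have q: "qf V (laplacian V E) x = n * n * (\<Sum>u\<in>T. NS u)"
    using nst by (simp add: algebra_simps)
  have e: "t * c \<le> (\<Sum>u\<in>T. NS u)"
  proof -
    have "(\<Sum>u\<in>T. c) \<le> (\<Sum>u\<in>T. NS u)" using c by (intro sum_mono) (auto simp: NS_def T_def)
    then show ?thesis by (simp add: t_def)
  qed
  have nx: "nsq V x = s * t * n"
  proof -
    have "nsq V x = (\<Sum>u\<in>S. x u ^ 2) + (\<Sum>u\<in>T. x u ^ 2)"
      unfolding nsq_def VST(1) using finS finT VST(2) by (simp add: sum.union_disjoint)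
    also have "\<dots> = (\<Sum>u\<in>S. t ^ 2) + (\<Sum>u\<in>T. s ^ 2)"
      using VST by (intro arg_cong2[where f="(+)"] sum.cong refl) (auto simp: x_def)
    finally show ?thesis using nst by (simp add: s_def t_def power2_eq_square algebra_simps)
  qed
  have np: "n > 0" using nst tp s_def by simp
  have "n * n * (t * c) \<le> mu * (s * t * n)"
    using ray[of x] q nx e np by (smt (verit) mult_left_mono mult_nonneg_nonneg)
  then have "(n * t) * (n * c) \<le> (n * t) * (mu * s)" by (simp add: algebra_simps)
  then have "n * c \<le> mu * s" using np tp by (simp add: mult_le_cancel_left_pos)
  then show ?thesis by (simp add: n_def s_def)
qed

lemma deg_split:
  assumes g: "simple_graph V E" and SV: "S \<subseteq> V"
  shows "Defs.degree V E v = card (nbhd_in E S v) + card (nbhd_in E (V - S) v)"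
proof -
  have fin: "finite V" using g by (simp add: simple_graph_def)
  have "nbhd_in E V v = nbhd_in E S v \<union> nbhd_in E (V - S) v"
       "nbhd_in E S v \<inter> nbhd_in E (V - S) v = {}"
    using SV unfolding nbhd_in_def by auto
  moreover have "finite (nbhd_in E S v)" "finite (nbhd_in E (V - S) v)"
    using SV unfolding nbhd_in_def by (auto intro: rev_finite_subset[OF fin])
  ultimately show ?thesis unfolding Defs.degree_def by (simp add: card_Un_disjoint)
qed

lemma min_deg_le:
  assumes g: "simple_graph V E" and v: "v \<in> V"
  shows "min_degree V E \<le> Defs.degree V E v"
  using g v unfolding min_degree_def simple_graph_def by (intro Min_le) auto

lemma edge_bound:
  assumes g: "simple_graph V E" and uv: "E u v"
    and ray: "\<And>x. qf V (laplacian V E) x \<le> mu * nsq V x"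
  shows "real (min_degree V E) + 1 \<le> mu"
proof -
  have fin: "finite V" and u: "u \<in> V" and v: "v \<in> V" and ne: "u \<noteq> v"
    using g uv unfolding simple_graph_def by metis+
  let ?L = "laplacian V E"
  define y where "y = (\<lambda>w. (if w = u then 1 else 0) - (if w = v then 1 else (0::real)))"
  have inner: "(\<Sum>w\<in>V. ?L a w * y w) = ?L a u - ?L a v" for a
  proof -
    have "(\<Sum>w\<in>V. ?L a w * y w) = (\<Sum>w\<in>V. (if w = u then ?L a u else 0) - (if w = v then ?L a v else 0))"
      by (intro sum.cong refl) (auto simp: y_def)
    also have "\<dots> = ?L a u - ?L a v" using fin u v by (simp add: sum_subtractf)
    finally show ?thesis .
  qed
  have "qf V ?L y = (\<Sum>a\<in>V. (if a = u then ?L u u - ?L u v else 0) - (if a = v then ?L v u - ?L v v else 0))"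
    unfolding qf_alt inner by (intro sum.cong refl) (auto simp: y_def)
  also have "\<dots> = ?L u u - ?L u v - ?L v u + ?L v v" using fin u v by (simp add: sum_subtractf)
  also have "\<dots> = real (Defs.degree V E u) + real (Defs.degree V E v) + 2"
    using uv g ne unfolding laplacian_def simple_graph_def by auto
  finally have q: "qf V ?L y = real (Defs.degree V E u) + real (Defs.degree V E v) + 2" .
  have "nsq V y = (\<Sum>a\<in>V. (if a = u then 1 else 0) + (if a = v then 1 else 0))"
    unfolding nsq_def by (intro sum.cong refl) (auto simp: y_def ne)
  also have "\<dots> = 2" using fin u v by (simp add: sum.distrib)
  finally have n: "nsq V y = 2" .
  have "real (min_degree V E) \<le> real (Defs.degree V E u)" "real (min_degree V E) \<le> real (Defs.degree V E v)"
    using min_deg_le[OF g u] min_deg_le[OF g v] by auto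
  then show ?thesis using ray[of y] unfolding q n by linarith
qed

lemma no_edge_eig:
  assumes g: "simple_graph V E" and noe: "\<forall>u v. \<not> E u v"
    and ev: "is_eigenvalue_on V (laplacian V E) mu"
  shows "mu = 0"
proof -
  have L0: "laplacian V E a b = 0" for a b
    using noe unfolding laplacian_def Defs.degree_def nbhd_in_def by auto
  obtain x v where "v \<in> V" "x v \<noteq> 0" "\<forall>u\<in>V. (\<Sum>w\<in>V. laplacian V E u w * x w) = mu * x u"
    using ev unfolding is_eigenvalue_on_def by blast
  then show ?thesis using L0 by auto
qed

lemma ceil_le_nat: "x \<le> real k \<Longrightarrow> real_of_int \<lceil>x\<rceil> \<le> real k"
  by (metis ceiling_le_iff of_int_of_nat_eq of_int_le_iff)

lemma main_bound:
  assumes g: "simple_graph V E" and ne: "V \<noteq> {}" and SV: "S \<subseteq> V"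
    and c: "\<forall>v\<in>V-S. c \<le> real (card (nbhd_in E S v))"
    and c0: "0 \<le> c" and c1: "c \<le> real (min_degree V E) + 1"
  shows "real_of_int \<lceil>real (card V) / laplacian_spectral_radius V E * c\<rceil> \<le> real (card S)"
proof -
  let ?mu = "laplacian_spectral_radius V E"
  note ray = lsr_props(2)[OF g ne]
  show ?thesis
  proof (cases "?mu \<le> 0")
    case True
    then have "real (card V) / ?mu * c \<le> 0"
      by (intro mult_nonpos_nonneg divide_nonneg_nonpos c0) auto
    then show ?thesis by (intro ceil_le_nat) auto
  next
    case False
    then have mp: "?mu > 0" by simp
    show ?thesis
    proof (cases "V - S = {}")
      case False
      have "real (card V) * c \<le> ?mu * real (card S)"
        by (rule cut_bound[OF g SV False c ray])
      then have "real (card V) / ?mu * c \<le> real (card S)" using mp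
        by (simp add: divide_le_eq mult.commute)
      then show ?thesis by (rule ceil_le_nat)
    next
      case True
      then have S: "S = V" using SV by auto
      have "c \<le> ?mu"
      proof (cases "\<exists>u v. E u v")
        case True
        then obtain u v where "E u v" by blast
        then show ?thesis using edge_bound[OF g _ ray] c1 by force
      next
        case False
        then have "?mu = 0" using no_edge_eig[OF g _ lsr_props(1)[OF g ne]] by blast
        then show ?thesis using mp by simp
      qed
      then have "c * real (card V) \<le> ?mu * real (card V)" by (rule mult_right_mono) auto
      then have "real (card V) / ?mu * c \<le> real (card V) * 1" using mp c0
        by (simp add: divide_le_eq mult.commute)
      then show ?thesis using S by (intro ceil_le_nat) simp
    qed
  qed
qed

lemma alliance_min:
  assumes g: "simple_graph V E" and ne: "V \<noteq> {}"
    and P: "\<And>S. P S \<Longrightarrow> S \<subseteq> V" and PV: "P V"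
  shows "\<exists>S. P S \<and> card S = Min (card ` {S. P S})"
proof -
  have fin: "finite V" using g by (simp add: simple_graph_def)
  have "finite {S. P S}" using P by (intro finite_subset[OF _ finite_Pow_iff[THEN iffD2, OF fin]]) auto
  then have "Min (card ` {S. P S}) \<in> card ` {S. P S}" using PV by (intro Min_in) auto
  then show ?thesis by auto
qed

theorem theorem6:
  fixes V :: "'a set" and E :: "'a \<Rightarrow> 'a \<Rightarrow> bool"
  assumes "simple_graph V E" and "V \<noteq> {}"
  shows "real (offensive_alliance_number V E) \<ge>
           real_of_int \<lceil>real (card V) / laplacian_spectral_radius V E
              * real_of_int \<lceil>real (min_degree V E + 1) / 2\<rceil>\<rceil>
         \<and> real (strong_offensive_alliance_number V E) \<ge>
           real_of_int \<lceil>real (card V) / laplacian_spectral_radius V E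
              * (real_of_int \<lceil>real (min_degree V E) / 2\<rceil> + 1)\<rceil>"
proof
  note g = assms(1) and ne = assms(2)
  let ?d = "min_degree V E"
  obtain S where S: "global_offensive_alliance V E S"
      "card S = offensive_alliance_number V E"
    using alliance_min[OF g ne, of "global_offensive_alliance V E"]
    unfolding offensive_alliance_number_def global_offensive_alliance_def using ne by auto
  have SV: "S \<subseteq> V" using S unfolding global_offensive_alliance_def by auto
  have c: "\<forall>v\<in>V-S. real_of_int \<lceil>real (?d + 1) / 2\<rceil> \<le> real (card (nbhd_in E S v))"
  proof
    fix v assume v: "v \<in> V - S"
    have "card (nbhd_in E S v) \<ge> card (nbhd_in E (V - S) v) + 1"
      using S v unfolding global_offensive_alliance_def by auto
    moreover have "Defs.degree V E v = card (nbhd_in E S v) + card (nbhd_in E (V - S) v)"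
      by (rule deg_split[OF g SV])
    moreover have "?d \<le> Defs.degree V E v" using min_deg_le[OF g] v by auto
    ultimately have "?d + 1 \<le> 2 * card (nbhd_in E S v)" by linarith
    then have "real (?d + 1) \<le> 2 * real (card (nbhd_in E S v))" by linarith
    then have "real (?d + 1) / 2 \<le> real (card (nbhd_in E S v))" by (simp add: divide_le_eq mult.commute)
    then show "real_of_int \<lceil>real (?d + 1) / 2\<rceil> \<le> real (card (nbhd_in E S v))"
      by (rule ceil_le_nat)
  qed
  have c0: "0 \<le> real_of_int \<lceil>real (?d + 1) / 2\<rceil>"
    by (meson le_of_int_ceiling order_trans divide_nonneg_nonneg of_nat_0_le_iff zero_le_numeral)
  have c1: "real_of_int \<lceil>real (?d + 1) / 2\<rceil> \<le> real ?d + 1"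
    using ceil_le_nat[of "real (?d + 1) / 2" "?d + 1"] by simp
  show "real (offensive_alliance_number V E) \<ge>
           real_of_int \<lceil>real (card V) / laplacian_spectral_radius V E
              * real_of_int \<lceil>real (?d + 1) / 2\<rceil>\<rceil>"
    using main_bound[OF g ne SV c c0 c1] S(2) by simp
next
  note g = assms(1) and ne = assms(2)
  let ?d = "min_degree V E"
  obtain S where S: "global_strong_offensive_alliance V E S"
      "card S = strong_offensive_alliance_number V E"
    using alliance_min[OF g ne, of "global_strong_offensive_alliance V E"]
    unfolding strong_offensive_alliance_number_def global_strong_offensive_alliance_def using ne by auto
  have SV: "S \<subseteq> V" using S unfolding global_strong_offensive_alliance_def by auto
  have c: "\<forall>v\<in>V-S. real_of_int \<lceil>real ?d / 2\<rceil> + 1 \<le> real (card (nbhd_in E S v))"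
  proof
    fix v assume v: "v \<in> V - S"
    have "card (nbhd_in E S v) \<ge> card (nbhd_in E (V - S) v) + 2"
      using S v unfolding global_strong_offensive_alliance_def by auto
    moreover have "Defs.degree V E v = card (nbhd_in E S v) + card (nbhd_in E (V - S) v)"
      by (rule deg_split[OF g SV])
    moreover have "?d \<le> Defs.degree V E v" using min_deg_le[OF g] v by auto
    ultimately have "?d \<le> 2 * (card (nbhd_in E S v) - 1)" by linarith
    then have "real ?d \<le> 2 * real (card (nbhd_in E S v) - 1)" by linarith
    then have "real ?d / 2 \<le> real (card (nbhd_in E S v) - 1)" by (simp add: divide_le_eq mult.commute)
    then have "real_of_int \<lceil>real ?d / 2\<rceil> \<le> real (card (nbhd_in E S v) - 1)"
      by (rule ceil_le_nat)
    moreover have "card (nbhd_in E S v) \<ge> 1" using \<open>card (nbhd_in E S v) \<ge> _\<close> by simp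
    ultimately show "real_of_int \<lceil>real ?d / 2\<rceil> + 1 \<le> real (card (nbhd_in E S v))"
      by (simp add: of_nat_diff)
  qed
  have c0: "0 \<le> real_of_int \<lceil>real ?d / 2\<rceil> + 1"
    by (smt (verit) le_of_int_ceiling divide_nonneg_nonneg of_nat_0_le_iff zero_le_numeral)
  have c1: "real_of_int \<lceil>real ?d / 2\<rceil> + 1 \<le> real ?d + 1"
    using ceil_le_nat[of "real ?d / 2" "?d"] by simp
  show "real (strong_offensive_alliance_number V E) \<ge>
           real_of_int \<lceil>real (card V) / laplacian_spectral_radius V E
              * (real_of_int \<lceil>real ?d / 2\<rceil> + 1)\<rceil>"
    using main_bound[OF g ne SV c c0 c1] S(2) by simp
qed

end
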